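(* For every $\epsilon_1,\epsilon_2>0$ there exists $\delta>0$ such that every $(d-1)$-dimensional simplicial complex $\Gamma$ with $n$ vertices satisfying $\mathrm{gr}_1(\Gamma)>4$ and $d<\delta n$ contains at most $\epsilon_1 n$ vertices of degree at least $\epsilon_2 n$.
   Context: A simplicial complex $\Gamma$ on a finite vertex set $V=V(\Gamma)$ is a family of subsets of $V$ (faces) closed under taking subsets; its dimension is $\max\{|F|:F\in\Gamma\}-1$. The degree of a vertex $v$ is the number of 2-element faces (edges) containing $v$. For $W\subseteq V$, $\Gamma[W]=\{F\in\Gamma:F\subseteq W\}$. For a face $F$ (possibly empty), $\mathrm{lk}_\Gamma(F)=\{G\setminus F: F\subseteq G\in\Gamma\}$. Fix a field $\mathbf{k}$; $\tilde H_i(\cdot;\mathbf{k})$ is reduced simplicial homology. The $1$-girth is $\mathrm{gr}_{1}(\Gamma)=\min\{|W|: W\subseteq V(\Gamma),\ \tilde H_{1}(\mathrm{lk}_\Gamma(F)[W];\mathbf{k})\neq 0 \text{ for some face } F\in\Gamma \text{ (including } F=\emptyset)\}$, or $\infty$ if none exists. *)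

theory Defs
  imports Main "HOL-Library.Extended_Nat"
begin

definition simplicial_complex :: "nat set set \<Rightarrow> bool" where
  "simplicial_complex \<Gamma> \<longleftrightarrow> \<Gamma> \<noteq> {} \<and> finite \<Gamma> \<and> (\<forall>F\<in>\<Gamma>. finite F)
     \<and> (\<forall>F\<in>\<Gamma>. \<forall>G. G \<subseteq> F \<longrightarrow> G \<in> \<Gamma>)"

definition vertices :: "nat set set \<Rightarrow> nat set" where
  "vertices \<Gamma> = \<Union>\<Gamma>"

(* dimension + 1 = maximal face cardinality *)
definition max_face_card :: "nat set set \<Rightarrow> nat" where
  "max_face_card \<Gamma> = Max (card ` \<Gamma>)"

definition vdegree :: "nat set set \<Rightarrow> nat \<Rightarrow> nat" where
  "vdegree \<Gamma> v = card {e \<in> \<Gamma>. card e = 2 \<and> v \<in> e}"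

definition induced :: "nat set set \<Rightarrow> nat set \<Rightarrow> nat set set" where
  "induced \<Gamma> W = {F \<in> \<Gamma>. F \<subseteq> W}"

definition link :: "nat set set \<Rightarrow> nat set \<Rightarrow> nat set set" where
  "link \<Gamma> F = {G - F | G. F \<subseteq> G \<and> G \<in> \<Gamma>}"

(* Simplicial chains with coefficients in field 'k, using the orientation induced by
   the order on nat. A 1-chain is c a b (a < b) on the edge {a,b};
   a 2-chain is t a b x (a < b < x) on the triangle {a,b,x}. *)
definition is_1cycle :: "nat set set \<Rightarrow> (nat \<Rightarrow> nat \<Rightarrow> 'k::field) \<Rightarrow> bool" where
  "is_1cycle \<Delta> c \<longleftrightarrow> (\<forall>v.
      (\<Sum>u\<in>{u. u < v \<and> {u, v} \<in> \<Delta>}. c u v) - (\<Sum>u\<in>{u. v < u \<and> {v, u} \<in> \<Delta>}. c v u) = 0)"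

definition is_1boundary :: "nat set set \<Rightarrow> (nat \<Rightarrow> nat \<Rightarrow> 'k::field) \<Rightarrow> bool" where
  "is_1boundary \<Delta> c \<longleftrightarrow> (\<exists>t :: nat \<Rightarrow> nat \<Rightarrow> nat \<Rightarrow> 'k.
      \<forall>a b. a < b \<and> {a, b} \<in> \<Delta> \<longrightarrow>
        c a b = (\<Sum>x\<in>{x. x < a \<and> {x, a, b} \<in> \<Delta>}. t x a b)
              - (\<Sum>x\<in>{x. a < x \<and> x < b \<and> {a, x, b} \<in> \<Delta>}. t a x b)
              + (\<Sum>x\<in>{x. b < x \<and> {a, b, x} \<in> \<Delta>}. t a b x))"

definition H1_nonzero :: "'k::field itself \<Rightarrow> nat set set \<Rightarrow> bool" where
  "H1_nonzero K \<Delta> \<longleftrightarrow> (\<exists>c :: nat \<Rightarrow> nat \<Rightarrow> 'k. is_1cycle \<Delta> c \<and> \<not> is_1boundary \<Delta> c)"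

(* 1-girth; Inf {} = \<infinity> in enat *)
definition girth1 :: "'k::field itself \<Rightarrow> nat set set \<Rightarrow> enat" where
  "girth1 K \<Gamma> = (INF W \<in> {W. W \<subseteq> vertices \<Gamma> \<and>
        (\<exists>F\<in>\<Gamma>. H1_nonzero K (induced (link \<Gamma> F) W))}. enat (card W))"

end

theory Submission
  imports Defs
begin


definition Nb :: "nat set set \<Rightarrow> nat \<Rightarrow> nat set" where
  "Nb \<Delta> v = {u. u \<noteq> v \<and> {u, v} \<in> \<Delta>}"

definition cyc :: "(nat \<times> nat) set \<Rightarrow> nat \<Rightarrow> nat \<Rightarrow> 'k::field" where
  "cyc D p q = (if (p,q) \<in> D then 1 else 0) - (if (q,p) \<in> D then 1 else 0)"

lemma cyc_anti: "cyc D q p = - cyc D p q"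
  by (simp add: cyc_def)

lemma cycle_sum:
  fixes c :: "nat \<Rightarrow> nat \<Rightarrow> 'k::field"
  assumes anti: "\<forall>p q. c q p = - c p q" and fin: "finite (Nb \<Delta> v)"
  shows "(\<Sum>u\<in>{u. u < v \<and> {u, v} \<in> \<Delta>}. c u v) - (\<Sum>u\<in>{u. v < u \<and> {v, u} \<in> \<Delta>}. c v u)
       = (\<Sum>u\<in>Nb \<Delta> v. c u v)"
proof -
  let ?L = "{u. u < v \<and> {u, v} \<in> \<Delta>}" and ?R = "{u. v < u \<and> {v, u} \<in> \<Delta>}"
  have eq: "Nb \<Delta> v = ?L \<union> ?R" by (auto simp: Nb_def insert_commute)
  have fL: "finite ?L" and fR: "finite ?R" using fin eq by auto
  have "(\<Sum>u\<in>?R. c v u) = (\<Sum>u\<in>?R. - c u v)" using anti by metis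
  also have "\<dots> = - (\<Sum>u\<in>?R. c u v)" by (simp add: sum_negf)
  finally have "(\<Sum>u\<in>?R. c v u) = - (\<Sum>u\<in>?R. c u v)" .
  moreover have "(\<Sum>u\<in>Nb \<Delta> v. c u v) = (\<Sum>u\<in>?L. c u v) + (\<Sum>u\<in>?R. c u v)"
    unfolding eq by (rule sum.union_disjoint[OF fL fR]) auto
  ultimately show ?thesis by simp
qed

lemma cycle_from_Nb:
  fixes c :: "nat \<Rightarrow> nat \<Rightarrow> 'k::field"
  assumes anti: "\<forall>p q. c q p = - c p q" and fin: "\<forall>v. finite (Nb \<Delta> v)"
    and s: "\<forall>v. (\<Sum>u\<in>Nb \<Delta> v. c u v) = 0"
  shows "is_1cycle \<Delta> c"
  unfolding is_1cycle_def using cycle_sum[OF anti] fin s by simp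

lemma card3: "x \<noteq> a \<Longrightarrow> x \<noteq> b \<Longrightarrow> a \<noteq> b \<Longrightarrow> card {x, a, b} = 3"
  by simp

lemma not_boundary:
  fixes c :: "nat \<Rightarrow> nat \<Rightarrow> 'k::field"
  assumes nt: "\<forall>A\<in>\<Delta>. card A \<noteq> 3" and ab: "a < b" "{a,b} \<in> \<Delta>" and nz: "c a b \<noteq> 0"
  shows "\<not> is_1boundary \<Delta> c"
proof
  assume "is_1boundary \<Delta> c"
  then obtain t :: "nat \<Rightarrow> nat \<Rightarrow> nat \<Rightarrow> 'k" where t: "\<forall>a b. a < b \<and> {a, b} \<in> \<Delta> \<longrightarrow>
        c a b = (\<Sum>x\<in>{x. x < a \<and> {x, a, b} \<in> \<Delta>}. t x a b)
              - (\<Sum>x\<in>{x. a < x \<and> x < b \<and> {a, x, b} \<in> \<Delta>}. t a x b)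
              + (\<Sum>x\<in>{x. b < x \<and> {a, b, x} \<in> \<Delta>}. t a b x)"
    unfolding is_1boundary_def by blast
  have e1: "{x. x < a \<and> {x, a, b} \<in> \<Delta>} = {}"
  proof -
    { fix x assume "x < a" "{x,a,b} \<in> \<Delta>"
      moreover have "card {x,a,b} = 3" using \<open>x<a\<close> ab by (intro card3) auto
      ultimately have False using nt by auto }
    then show ?thesis by auto
  qed
  have e2: "{x. a < x \<and> x < b \<and> {a, x, b} \<in> \<Delta>} = {}"
  proof -
    { fix x assume "a < x" "x < b" "{a,x,b} \<in> \<Delta>"
      moreover have "card {a,x,b} = 3" using \<open>a<x\<close> \<open>x<b\<close> by (intro card3) auto
      ultimately have False using nt by auto }
    then show ?thesis by auto
  qed
  have e3: "{x. b < x \<and> {a, b, x} \<in> \<Delta>} = {}"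
  proof -
    { fix x assume "b < x" "{a,b,x} \<in> \<Delta>"
      moreover have "card {a,b,x} = 3" using \<open>b<x\<close> ab by (intro card3) auto
      ultimately have False using nt by auto }
    then show ?thesis by auto
  qed
  have "c a b = (\<Sum>x\<in>{x. x < a \<and> {x, a, b} \<in> \<Delta>}. t x a b)
              - (\<Sum>x\<in>{x. a < x \<and> x < b \<and> {a, x, b} \<in> \<Delta>}. t a x b)
              + (\<Sum>x\<in>{x. b < x \<and> {a, b, x} \<in> \<Delta>}. t a b x)" using t ab by blast
  also have "\<dots> = 0" unfolding e1 e2 e3 by simp
  finally show False using nz by simp
qed

lemma H1_from:
  fixes K :: "'k::field itself" and c :: "nat \<Rightarrow> nat \<Rightarrow> 'k"
  assumes "is_1cycle \<Delta> c" "\<forall>A\<in>\<Delta>. card A \<noteq> 3" "p \<noteq> q" "{p,q} \<in> \<Delta>" "c p q \<noteq> 0"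
    "\<forall>p q. c q p = - c p q"
  shows "H1_nonzero K \<Delta>"
proof (cases "p < q")
  case True
  then show ?thesis using assms(1,2,4,5) not_boundary[of \<Delta> p q c] unfolding H1_nonzero_def by blast
next
  case False
  then have "q < p" using assms(3) by simp
  moreover have "{q,p} \<in> \<Delta>" using assms(4) by (simp add: insert_commute)
  moreover have "c q p \<noteq> 0"
  proof -
    have "c q p = - c p q" using assms(6) by blast
    then show ?thesis using assms(5) by simp
  qed
  ultimately show ?thesis using assms(1,2) not_boundary[of \<Delta> q p c] unfolding H1_nonzero_def by blast
qed

lemma girth_use:
  fixes K :: "'k::field itself"
  assumes g: "girth1 K \<Gamma> > 4" and W: "W \<subseteq> vertices \<Gamma>" "card W \<le> 4" and F: "F \<in> \<Gamma>"
    and h: "H1_nonzero K (induced (link \<Gamma> F) W)"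
  shows False
proof -
  have "girth1 K \<Gamma> \<le> enat (card W)"
    unfolding girth1_def using W F h by (intro INF_lower) auto
  with g W show False
    by (metis enat_ord_simps(1) le_less_trans linorder_not_le numeral_eq_enat)
qed

lemma link_mem: "X \<inter> F = {} \<Longrightarrow> X \<in> link \<Gamma> F \<longleftrightarrow> F \<union> X \<in> \<Gamma>"
  unfolding link_def
proof
  assume "X \<inter> F = {}" "X \<in> {G - F |G. F \<subseteq> G \<and> G \<in> \<Gamma>}"
  then obtain G where "X = G - F" "F \<subseteq> G" "G \<in> \<Gamma>" by auto
  moreover have "F \<union> X = G" using calculation by auto
  ultimately show "F \<union> X \<in> \<Gamma>" by simp
next
  assume "X \<inter> F = {}" "F \<union> X \<in> \<Gamma>"
  then show "X \<in> {G - F |G. F \<subseteq> G \<and> G \<in> \<Gamma>}"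
    by (intro CollectI exI[of _ "F \<union> X"]) auto
qed

lemma tri_fill:
  fixes K :: "'k::field itself"
  assumes g: "girth1 K \<Gamma> > 4" and F: "F \<in> \<Gamma>"
   and d: "a\<noteq>b" "b\<noteq>c" "a\<noteq>c" "a\<notin>F" "b\<notin>F" "c\<notin>F"
   and e: "F\<union>{a,b}\<in>\<Gamma>" "F\<union>{b,c}\<in>\<Gamma>" "F\<union>{a,c}\<in>\<Gamma>"
  shows "F\<union>{a,b,c}\<in>\<Gamma>"
proof (rule ccontr)
  assume nf: "F\<union>{a,b,c} \<notin> \<Gamma>"
  define W where "W = {a,b,c}"
  define \<Delta> where "\<Delta> = induced (link \<Gamma> F) W"
  have mem: "X \<in> \<Delta> \<longleftrightarrow> X \<subseteq> W \<and> F \<union> X \<in> \<Gamma>" for X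
  proof (cases "X \<subseteq> W")
    case True
    then have "X \<inter> F = {}" using d W_def by auto
    then show ?thesis using True link_mem[of X F \<Gamma>] by (simp add: \<Delta>_def induced_def)
  qed (simp add: \<Delta>_def induced_def)
  have e': "F\<union>{b,a}\<in>\<Gamma>" "F\<union>{c,b}\<in>\<Gamma>" "F\<union>{c,a}\<in>\<Gamma>" using e by (simp_all add: insert_commute)
  have Nb: "Nb \<Delta> v = (if v \<in> W then W - {v} else {})" for v
    unfolding Nb_def mem W_def using e e' d by auto
  define D where "D = {(a,b),(b,c),(c,a)}"
  define cc :: "nat \<Rightarrow> nat \<Rightarrow> 'k" where "cc = cyc D"
  have anti: "\<forall>p q. cc q p = - cc p q" unfolding cc_def by (simp add: cyc_def)
  have cyc: "is_1cycle \<Delta> cc"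
  proof (rule cycle_from_Nb[OF anti])
    show "\<forall>v. finite (Nb \<Delta> v)" unfolding Nb W_def by simp
    show "\<forall>v. (\<Sum>u\<in>Nb \<Delta> v. cc u v) = 0"
    proof
      fix v
      show "(\<Sum>u\<in>Nb \<Delta> v. cc u v) = 0"
      proof (cases "v \<in> W")
        case True
        then have "v = a \<or> v = b \<or> v = c" unfolding W_def by auto
        then show ?thesis unfolding Nb W_def cc_def cyc_def D_def using d
          by (auto simp: insert_Diff_if)
      qed (simp add: Nb)
    qed
  qed
  have nt: "\<forall>A\<in>\<Delta>. card A \<noteq> 3"
  proof (intro ballI notI)
    fix A assume A: "A \<in> \<Delta>" "card A = 3"
    then have "A \<subseteq> W" "F \<union> A \<in> \<Gamma>" using mem by auto
    moreover have "card W = 3" unfolding W_def using d by simp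
    ultimately have "A = W" using A(2) by (intro card_seteq) (auto simp: W_def)
    with \<open>F \<union> A \<in> \<Gamma>\<close> nf show False unfolding W_def by simp
  qed
  have ab: "{a,b} \<in> \<Delta>" using mem e W_def by auto
  have nz: "cc a b \<noteq> 0" unfolding cc_def cyc_def D_def using d by auto
  have H: "H1_nonzero K \<Delta>" by (rule H1_from[OF cyc nt d(1) ab nz anti])
  have Wv: "W \<subseteq> vertices \<Gamma>" unfolding vertices_def W_def using e by blast
  show False
    by (rule girth_use[OF g Wv _ F H[unfolded \<Delta>_def]]) (simp add: W_def card_insert_if)
qed

lemma empty_face: "simplicial_complex \<Gamma> \<Longrightarrow> {} \<in> \<Gamma>"
  unfolding simplicial_complex_def by blast

lemma c4_free:
  fixes K :: "'k::field itself"
  assumes sc: "simplicial_complex \<Gamma>" and g: "girth1 K \<Gamma> > 4"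
   and d: "distinct [u,x,w,y]" and e: "{u,x}\<in>\<Gamma>" "{x,w}\<in>\<Gamma>" "{w,y}\<in>\<Gamma>" "{y,u}\<in>\<Gamma>"
   and ne: "{u,w}\<notin>\<Gamma>" "{x,y}\<notin>\<Gamma>"
  shows False
proof -
  define W where "W = {u,x,w,y}"
  define \<Delta> where "\<Delta> = induced (link \<Gamma> {}) W"
  have sub: "\<And>A B. A \<in> \<Gamma> \<Longrightarrow> B \<subseteq> A \<Longrightarrow> B \<in> \<Gamma>" using sc unfolding simplicial_complex_def by blast
  have mem: "X \<in> \<Delta> \<longleftrightarrow> X \<subseteq> W \<and> X \<in> \<Gamma>" for X
    using link_mem[of X "{}" \<Gamma>] by (auto simp: \<Delta>_def induced_def)
  have e': "{x,u}\<in>\<Gamma>" "{w,x}\<in>\<Gamma>" "{y,w}\<in>\<Gamma>" "{u,y}\<in>\<Gamma>" "{w,u}\<notin>\<Gamma>" "{y,x}\<notin>\<Gamma>"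
    using e ne by (simp_all add: insert_commute)
  have Nbu: "Nb \<Delta> u = {x,y}" unfolding Nb_def mem W_def using e e' d ne by auto
  have Nbw: "Nb \<Delta> w = {x,y}" unfolding Nb_def mem W_def using e e' d ne by auto
  have Nbx: "Nb \<Delta> x = {u,w}" unfolding Nb_def mem W_def using e e' d ne by auto
  have Nby: "Nb \<Delta> y = {u,w}" unfolding Nb_def mem W_def using e e' d ne by auto
  have Nbo: "Nb \<Delta> v = {}" if "v \<notin> W" for v unfolding Nb_def mem using that by auto
  have Nb: "Nb \<Delta> v = (if v = u \<or> v = w then {x,y} else if v = x \<or> v = y then {u,w} else {})" for v
    using Nbu Nbw Nbx Nby Nbo[of v] unfolding W_def by auto
  define D where "D = {(u,x),(x,w),(w,y),(y,u)}"
  define cc :: "nat \<Rightarrow> nat \<Rightarrow> 'k" where "cc = cyc D"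
  have anti: "\<forall>p q. cc q p = - cc p q" unfolding cc_def by (simp add: cyc_def)
  have cyc: "is_1cycle \<Delta> cc"
  proof (rule cycle_from_Nb[OF anti])
    show "\<forall>v. finite (Nb \<Delta> v)" unfolding Nb by simp
    show "\<forall>v. (\<Sum>u\<in>Nb \<Delta> v. cc u v) = 0"
    proof
      fix v
      show "(\<Sum>u\<in>Nb \<Delta> v. cc u v) = 0"
        unfolding Nb cc_def cyc_def D_def using d by auto
    qed
  qed
  have nt: "\<forall>A\<in>\<Delta>. card A \<noteq> 3"
  proof (intro ballI notI)
    fix A assume A: "A \<in> \<Delta>" "card A = 3"
    then have AW: "A \<subseteq> W" and AG: "A \<in> \<Gamma>" using mem by auto
    have "\<not> {u,w} \<subseteq> A" using AG sub ne by blast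
    moreover have "\<not> {x,y} \<subseteq> A" using AG sub ne by blast
    ultimately obtain s t where st: "s \<in> {u,w}" "t \<in> {x,y}" "s \<notin> A" "t \<notin> A" by auto
    then have "A \<subseteq> W - {s} - {t}" using AW by auto
    moreover have "card (W - {s} - {t}) = 2" using st d unfolding W_def by auto
    ultimately have "card A \<le> 2" by (metis card_mono finite.emptyI finite.insertI finite_Diff W_def)
    with A show False by simp
  qed
  have ab: "{u,x} \<in> \<Delta>" using mem e W_def by auto
  have nz: "cc u x \<noteq> 0" unfolding cc_def cyc_def D_def using d by auto
  have H: "H1_nonzero K \<Delta>" by (rule H1_from[OF cyc nt _ ab nz anti]) (use d in simp)
  have Wv: "W \<subseteq> vertices \<Gamma>" unfolding vertices_def W_def using e by blast
  show False
    by (rule girth_use[OF g Wv _ empty_face[OF sc] H[unfolded \<Delta>_def]]) (simp add: W_def card_insert_if)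
qed




lemma set3: "p\<in>C \<Longrightarrow> q\<in>C \<Longrightarrow> r\<in>C \<Longrightarrow> q\<noteq>p \<Longrightarrow> r\<noteq>p \<Longrightarrow> r\<noteq>q \<Longrightarrow>
  C - {r} = (C - {p,q,r}) \<union> {p,q} \<and> C - {p} = (C - {p,q,r}) \<union> {q,r} \<and>
  C - {q} = (C - {p,q,r}) \<union> {p,r} \<and> C = (C - {p,q,r}) \<union> {p,q,r}"
  by auto

locale cpx =
  fixes \<Gamma> :: "nat set set" and d :: nat
  assumes sc: "simplicial_complex \<Gamma>" and dmax: "max_face_card \<Gamma> = d"
  and tri: "\<And>F a b c. F\<in>\<Gamma> \<Longrightarrow> a\<noteq>b \<Longrightarrow> b\<noteq>c \<Longrightarrow> a\<noteq>c \<Longrightarrow> a\<notin>F \<Longrightarrow> b\<notin>F \<Longrightarrow> c\<notin>F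
     \<Longrightarrow> F\<union>{a,b}\<in>\<Gamma> \<Longrightarrow> F\<union>{b,c}\<in>\<Gamma> \<Longrightarrow> F\<union>{a,c}\<in>\<Gamma> \<Longrightarrow> F\<union>{a,b,c}\<in>\<Gamma>"
  and c4: "\<And>u x w y. distinct [u,x,w,y] \<Longrightarrow> {u,x}\<in>\<Gamma> \<Longrightarrow> {x,w}\<in>\<Gamma> \<Longrightarrow> {w,y}\<in>\<Gamma> \<Longrightarrow> {y,u}\<in>\<Gamma>
     \<Longrightarrow> {u,w}\<notin>\<Gamma> \<Longrightarrow> {x,y}\<notin>\<Gamma> \<Longrightarrow> False"
begin

lemma sub: "A\<in>\<Gamma> \<Longrightarrow> B\<subseteq>A \<Longrightarrow> B\<in>\<Gamma>"
  using sc unfolding simplicial_complex_def by blast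

lemma finG: "finite \<Gamma>" using sc unfolding simplicial_complex_def by blast

lemma finF: "A\<in>\<Gamma> \<Longrightarrow> finite A" using sc unfolding simplicial_complex_def by blast

lemma finV: "finite (vertices \<Gamma>)" unfolding vertices_def using finG finF by blast

lemma face_card: "A\<in>\<Gamma> \<Longrightarrow> card A \<le> d"
  using dmax finG unfolding max_face_card_def by (metis Max_ge finite_imageI imageI)

lemma clique_face: "finite C \<Longrightarrow> C \<subseteq> vertices \<Gamma> \<Longrightarrow> (\<forall>p\<in>C. \<forall>q\<in>C. p\<noteq>q \<longrightarrow> {p,q}\<in>\<Gamma>) \<Longrightarrow> C\<in>\<Gamma>"
proof (induction "card C" arbitrary: C rule: less_induct)
  case less
  show ?case
  proof (cases "C = {}")
    case True then show ?thesis using empty_face sc by simp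
  next
    case False
    then obtain p where p: "p\<in>C" by auto
    show ?thesis
    proof (cases "C = {p}")
      case True
      have "p \<in> vertices \<Gamma>" using less p by auto
      then obtain G where "G\<in>\<Gamma>" "p\<in>G" unfolding vertices_def by auto
      then show ?thesis using True sub[of G "{p}"] by simp
    next
      case False
      then obtain q where q: "q\<in>C" "q\<noteq>p" using p by auto
      show ?thesis
      proof (cases "C = {p,q}")
        case True then show ?thesis using less.prems(3) p q(1) q(2) by auto
      next
        case False
        then obtain r where r: "r\<in>C" "r\<noteq>p" "r\<noteq>q" using p q by auto
        define F where "F = C - {p,q,r}"
        have CF: "C - {r} = F \<union> {p,q} \<and> C - {p} = F \<union> {q,r} \<and> C - {q} = F \<union> {p,r} \<and> C = F \<union> {p,q,r}"
          unfolding F_def by (rule set3[OF p q(1) r(1) q(2) r(2) r(3)])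
        note CF1 = CF[THEN conjunct1] and CF2 = CF[THEN conjunct2, THEN conjunct1]
          and CF3 = CF[THEN conjunct2, THEN conjunct2, THEN conjunct1]
          and CF4 = CF[THEN conjunct2, THEN conjunct2, THEN conjunct2]
        have IH: "C - {z} \<in> \<Gamma>" if "z \<in> C" for z
        proof -
          have lt: "card (C - {z}) < card C" by (rule card_Diff1_less[OF less.prems(1) that])
          have fin: "finite (C - {z})" using less.prems(1) by (rule finite_Diff)
          have sb: "C - {z} \<subseteq> vertices \<Gamma>" using less.prems(2) by auto
          have cl: "\<forall>p\<in>C - {z}. \<forall>q\<in>C - {z}. p\<noteq>q \<longrightarrow> {p,q}\<in>\<Gamma>" using less.prems(3) by auto
          show ?thesis by (rule less.hyps[OF lt fin sb cl])
        qed
        have e1: "F \<union> {p,q} \<in> \<Gamma>" by (subst CF1[symmetric]) (rule IH[OF r(1)])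
        have e2: "F \<union> {q,r} \<in> \<Gamma>" by (subst CF2[symmetric]) (rule IH[OF p])
        have e3: "F \<union> {p,r} \<in> \<Gamma>" by (subst CF3[symmetric]) (rule IH[OF q(1)])
        have FG: "F \<in> \<Gamma>" using e1 sub[of "F \<union> {p,q}" F] by blast
        have nF: "p\<notin>F" "q\<notin>F" "r\<notin>F" by (simp_all add: F_def)
        have "F \<union> {p,q,r} \<in> \<Gamma>"
          by (rule tri[OF FG q(2)[symmetric] r(3)[symmetric] r(2)[symmetric] nF e1 e2 e3])
        then show ?thesis by (subst CF4)
      qed
    qed
  qed
qed

lemma clique_card: "finite C \<Longrightarrow> C \<subseteq> vertices \<Gamma> \<Longrightarrow> (\<forall>p\<in>C. \<forall>q\<in>C. p\<noteq>q \<longrightarrow> {p,q}\<in>\<Gamma>) \<Longrightarrow> card C \<le> d"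
  using clique_face face_card by blast

lemma Nb_sub: "Nb \<Gamma> v \<subseteq> vertices \<Gamma>"
  unfolding Nb_def vertices_def by blast

lemma finNb: "finite (Nb \<Gamma> v)" using Nb_sub finV finite_subset by blast

lemma common_nb: assumes "u\<noteq>w" "{u,w}\<notin>\<Gamma>" shows "card (Nb \<Gamma> u \<inter> Nb \<Gamma> w) \<le> d"
proof (rule clique_card)
  show "finite (Nb \<Gamma> u \<inter> Nb \<Gamma> w)" using finNb by blast
  show "Nb \<Gamma> u \<inter> Nb \<Gamma> w \<subseteq> vertices \<Gamma>" using Nb_sub by blast
  show "\<forall>p\<in>Nb \<Gamma> u \<inter> Nb \<Gamma> w. \<forall>q\<in>Nb \<Gamma> u \<inter> Nb \<Gamma> w. p \<noteq> q \<longrightarrow> {p, q} \<in> \<Gamma>"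
  proof (intro ballI impI)
    fix p q assume pq: "p \<in> Nb \<Gamma> u \<inter> Nb \<Gamma> w" "q \<in> Nb \<Gamma> u \<inter> Nb \<Gamma> w" "p \<noteq> q"
    show "{p,q} \<in> \<Gamma>"
    proof (rule ccontr)
      assume npq: "{p,q} \<notin> \<Gamma>"
      have e: "{p,u}\<in>\<Gamma>" "{p,w}\<in>\<Gamma>" "{q,u}\<in>\<Gamma>" "{q,w}\<in>\<Gamma>" "p\<noteq>u" "p\<noteq>w" "q\<noteq>u" "q\<noteq>w"
        using pq unfolding Nb_def by auto
      show False
        by (rule c4[of u p w q]) (use e assms pq npq in \<open>auto simp: insert_commute\<close>)
    qed
  qed
qed

lemma deg_le: "vdegree \<Gamma> v \<le> card (Nb \<Gamma> v)"
proof -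
  have "{e\<in>\<Gamma>. card e = 2 \<and> v\<in>e} \<subseteq> (\<lambda>u. {u,v}) ` Nb \<Gamma> v"
  proof
    fix e assume "e \<in> {e\<in>\<Gamma>. card e = 2 \<and> v\<in>e}"
    then have e: "e\<in>\<Gamma>" "card e = 2" "v\<in>e" by auto
    then obtain a b where ab: "e = {a,b}" "a\<noteq>b" by (meson card_2_iff)
    define u where "u = (if v = a then b else a)"
    have "e = {u,v}" "u \<noteq> v" using ab e u_def by auto
    then show "e \<in> (\<lambda>u. {u,v}) ` Nb \<Gamma> v" using e unfolding Nb_def by auto
  qed
  then have "vdegree \<Gamma> v \<le> card ((\<lambda>u. {u,v}) ` Nb \<Gamma> v)"
    unfolding vdegree_def using finNb by (intro card_mono) auto
  also have "\<dots> \<le> card (Nb \<Gamma> v)" by (rule card_image_le[OF finNb])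
  finally show ?thesis .
qed

definition indep :: "nat set \<Rightarrow> bool" where
  "indep I \<longleftrightarrow> (\<forall>p\<in>I. \<forall>q\<in>I. p\<noteq>q \<longrightarrow> {p,q}\<notin>\<Gamma>)"

lemma union_lower: "finite J \<Longrightarrow> J \<subseteq> vertices \<Gamma> \<Longrightarrow> indep J \<Longrightarrow>
   (\<Sum>u\<in>J. card (Nb \<Gamma> u)) \<le> card (\<Union>u\<in>J. Nb \<Gamma> u) + card J * card J * d"
proof (induction J rule: finite_induct)
  case empty then show ?case by simp
next
  case (insert u J)
  let ?U = "\<Union>w\<in>J. Nb \<Gamma> w"
  have ind: "indep J" using insert.prems unfolding indep_def by auto
  have IH: "(\<Sum>u\<in>J. card (Nb \<Gamma> u)) \<le> card ?U + card J * card J * d" using insert ind by auto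
  have fU: "finite ?U" using insert.hyps(1) finNb by auto
  have eq: "Nb \<Gamma> u \<inter> ?U = (\<Union>w\<in>J. Nb \<Gamma> u \<inter> Nb \<Gamma> w)" by auto
  have "card (Nb \<Gamma> u \<inter> ?U) \<le> (\<Sum>w\<in>J. card (Nb \<Gamma> u \<inter> Nb \<Gamma> w))"
    unfolding eq by (rule card_UN_le[OF insert.hyps(1)])
  also have "\<dots> \<le> (\<Sum>w\<in>J. d)"
  proof (rule sum_mono)
    fix w assume "w \<in> J"
    then have "u \<noteq> w" "{u,w} \<notin> \<Gamma>" using insert.hyps(2) insert.prems(2) unfolding indep_def by auto
    then show "card (Nb \<Gamma> u \<inter> Nb \<Gamma> w) \<le> d" by (rule common_nb)
  qed
  finally have ci: "card (Nb \<Gamma> u \<inter> ?U) \<le> card J * d" by simp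
  have cu: "card (Nb \<Gamma> u) + card ?U = card (Nb \<Gamma> u \<union> ?U) + card (Nb \<Gamma> u \<inter> ?U)"
    by (rule card_Un_Int[OF finNb fU])
  have sq: "card J * d + card J * card J * d \<le> Suc (card J) * Suc (card J) * d"
    by (simp add: algebra_simps)
  have "(\<Sum>u\<in>insert u J. card (Nb \<Gamma> u)) = card (Nb \<Gamma> u) + (\<Sum>u\<in>J. card (Nb \<Gamma> u))"
    using insert.hyps by simp
  also have "\<dots> \<le> card (Nb \<Gamma> u \<union> ?U) + card (insert u J) * card (insert u J) * d"
    using IH cu ci sq insert.hyps by simp
  finally show ?case by simp
qed

lemma indep_small:
  fixes e2 :: real
  assumes J: "J \<subseteq> {v \<in> vertices \<Gamma>. real (vdegree \<Gamma> v) \<ge> e2 * real (card (vertices \<Gamma>))}"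
    and ind: "indep J" and cJ: "card J = k" and hk: "real k * e2 \<ge> 2"
    and hd: "real d * real k * real k < real (card (vertices \<Gamma>))"
  shows False
proof -
  let ?n = "card (vertices \<Gamma>)"
  have JV: "J \<subseteq> vertices \<Gamma>" using J by auto
  have fJ: "finite J" using JV finV finite_subset by blast
  have 1: "(\<Sum>u\<in>J. card (Nb \<Gamma> u)) \<le> card (\<Union>u\<in>J. Nb \<Gamma> u) + k * k * d"
    using union_lower[OF fJ JV ind] cJ by simp
  have 2: "card (\<Union>u\<in>J. Nb \<Gamma> u) \<le> ?n" using Nb_sub finV by (intro card_mono) auto
  have 3: "(\<Sum>u\<in>J. e2 * real ?n) \<le> (\<Sum>u\<in>J. real (card (Nb \<Gamma> u)))"
  proof (rule sum_mono)
    fix u assume "u \<in> J"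
    then have "e2 * real ?n \<le> real (vdegree \<Gamma> u)" using J by auto
    also have "\<dots> \<le> real (card (Nb \<Gamma> u))" using deg_le by simp
    finally show "e2 * real ?n \<le> real (card (Nb \<Gamma> u))" .
  qed
  have 4: "real (\<Sum>u\<in>J. card (Nb \<Gamma> u)) \<le> real ?n + real k * real k * real d"
  proof -
    have "(\<Sum>u\<in>J. card (Nb \<Gamma> u)) \<le> ?n + k * k * d" using 1 2 by linarith
    then have "real (\<Sum>u\<in>J. card (Nb \<Gamma> u)) \<le> real (?n + k * k * d)" by (rule of_nat_mono)
    then show ?thesis by simp
  qed
  have 5: "real k * e2 * real ?n \<le> real ?n + real k * real k * real d"
    using 3 4 cJ by (simp add: of_nat_sum mult.assoc)
  have 6: "2 * real ?n \<le> real k * e2 * real ?n" using mult_right_mono[OF hk] by simp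
  from 5 6 hd show False by (simp add: algebra_simps)
qed


lemma indep_insert: "indep I \<Longrightarrow> \<forall>u\<in>I. {t,u}\<notin>\<Gamma> \<Longrightarrow> indep (insert t I)"
  unfolding indep_def by (metis insert_commute insert_iff)

lemma recur:
  assumes S: "S \<subseteq> vertices \<Gamma>" and hyp: "\<forall>J. J \<subseteq> S \<longrightarrow> indep J \<longrightarrow> card J < k" and k1: "1 \<le> k"
  shows "\<forall>T I0. k - card I0 = j \<longrightarrow> T \<subseteq> S \<longrightarrow> I0 \<subseteq> S \<longrightarrow> indep I0 \<longrightarrow> T \<inter> I0 = {}
     \<longrightarrow> (\<forall>t\<in>T. \<forall>i\<in>I0. {t,i}\<notin>\<Gamma>) \<longrightarrow> card T \<le> (2*k)^j * (k*k*d + d + k)"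
proof (induction j rule: less_induct)
  case (less j)
  show ?case
  proof (intro allI impI)
    fix T I0
    assume j: "k - card I0 = j" and TS: "T \<subseteq> S" and I0S: "I0 \<subseteq> S" and ind0: "indep I0"
      and dis: "T \<inter> I0 = {}" and noe: "\<forall>t\<in>T. \<forall>i\<in>I0. {t,i}\<notin>\<Gamma>"
    define E where "E = k*k*d + d + k"
    have finS: "finite S" using S finV finite_subset by blast
    have fT: "finite T" using TS finS finite_subset by blast
    have fI0: "finite I0" using I0S finS finite_subset by blast
    have pos: "1 \<le> (2*k)^j" using k1 by simp
    have "card T \<le> (2*k)^j * E"
    proof (cases "\<forall>p\<in>T. \<forall>q\<in>T. p\<noteq>q \<longrightarrow> {p,q}\<in>\<Gamma>")
      case True
      have "card T \<le> d" by (rule clique_card[OF fT _ True]) (use TS S in blast)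
      also have "d \<le> E" unfolding E_def by simp
      also have "E \<le> (2*k)^j * E" using pos by simp
      finally show ?thesis .
    next
      case False
      then obtain p q where pq: "p\<in>T" "q\<in>T" "p\<noteq>q" "{p,q}\<notin>\<Gamma>" by blast
      define II where "II = {I. I \<subseteq> T \<and> indep I}"
      have fII: "finite II" by (rule finite_subset[of _ "Pow T"]) (auto simp: II_def fT)
      have pqI: "{p,q} \<in> II" unfolding II_def indep_def using pq by (auto simp: insert_commute)
      define m where "m = Max (card ` II)"
      have "m \<in> card ` II" unfolding m_def using fII pqI by (intro Max_in) auto
      then obtain I where I: "I \<in> II" "card I = m" by auto
      have maxI: "card I' \<le> card I" if "I' \<in> II" for I'
        using Max_ge[OF finite_imageI[OF fII] imageI[OF that]] I m_def by simp
      have IT: "I \<subseteq> T" and indI: "indep I" using I unfolding II_def by auto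
      have fI: "finite I" using IT fT finite_subset by blast
      define r where "r = card I"
      have r2: "2 \<le> r" using maxI[OF pqI] pq(3) unfolding r_def by simp
      have ind0I: "indep (I0 \<union> I)" unfolding indep_def
      proof (intro ballI impI)
        fix a b assume ab: "a \<in> I0 \<union> I" "b \<in> I0 \<union> I" "a\<noteq>b"
        show "{a,b} \<notin> \<Gamma>"
        proof (cases "a \<in> I0")
          case True
          show ?thesis
          proof (cases "b \<in> I0")
            case True then show ?thesis using \<open>a\<in>I0\<close> ab ind0 unfolding indep_def by blast
          next
            case False then have "b \<in> T" using ab IT by blast
            then have "{b,a} \<notin> \<Gamma>" using noe \<open>a\<in>I0\<close> by blast
            then show ?thesis by (simp add: insert_commute)
          qed
        next
          case False then have aI: "a \<in> I" using ab by blast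
          show ?thesis
          proof (cases "b \<in> I0")
            case True then show ?thesis using noe aI IT by blast
          next
            case False then show ?thesis using aI ab indI unfolding indep_def by blast
          qed
        qed
      qed
      have dis0: "I0 \<inter> I = {}" using dis IT by blast
      have "I0 \<union> I \<subseteq> S" using I0S IT TS by blast
      then have "card (I0 \<union> I) < k" using hyp ind0I by blast
      then have lt: "card I0 + r < k" using card_Un_disjoint[OF fI0 fI dis0] r_def by simp
      have cover: "\<exists>u\<in>I. {t,u}\<in>\<Gamma>" if "t\<in>T" "t\<notin>I" for t
      proof (rule ccontr)
        assume nc: "\<not> (\<exists>u\<in>I. {t,u}\<in>\<Gamma>)"
        have "indep (insert t I)" by (rule indep_insert[OF indI]) (use nc in blast)
        then have "insert t I \<in> II" unfolding II_def using that IT by blast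
        then have "card (insert t I) \<le> card I" by (rule maxI)
        with that fI show False by simp
      qed
      define A where "A u = {t\<in>T. t = u \<or> (t\<noteq>u \<and> {t,u}\<in>\<Gamma> \<and> (\<forall>w\<in>I-{u}. {t,w}\<notin>\<Gamma>))}" for u
      define Y where "Y = (\<Union>u\<in>I. \<Union>w\<in>I-{u}. Nb \<Gamma> u \<inter> Nb \<Gamma> w)"
      have cov: "T \<subseteq> (\<Union>u\<in>I. A u) \<union> Y"
      proof
        fix t assume t: "t\<in>T"
        show "t \<in> (\<Union>u\<in>I. A u) \<union> Y"
        proof (cases "t\<in>I")
          case True
          have "t \<in> A t" unfolding A_def using t True indI unfolding indep_def by auto
          then show ?thesis using True by blast
        next
          case False
          then obtain u where u: "u\<in>I" "{t,u}\<in>\<Gamma>" using cover t by blast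
          have tu: "t\<noteq>u" using False u by blast
          show ?thesis
          proof (cases "\<forall>w\<in>I-{u}. {t,w}\<notin>\<Gamma>")
            case True
            then have "t \<in> A u" unfolding A_def using t tu u by auto
            then show ?thesis using u by blast
          next
            case False
            then obtain w where w: "w\<in>I" "w\<noteq>u" "{t,w}\<in>\<Gamma>" by blast
            have "t\<noteq>w" using \<open>t\<notin>I\<close> w by blast
            then have "t \<in> Nb \<Gamma> u \<inter> Nb \<Gamma> w" unfolding Nb_def using tu u w by auto
            then show ?thesis unfolding Y_def using u w by blast
          qed
        qed
      qed
      have fA: "finite (A u)" for u unfolding A_def using fT by simp
      have fY: "finite Y" unfolding Y_def using fI finNb by blast
      have cY: "card Y \<le> r*r*d"
      proof -
        have "card Y \<le> (\<Sum>u\<in>I. card (\<Union>w\<in>I-{u}. Nb \<Gamma> u \<inter> Nb \<Gamma> w))"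
          unfolding Y_def by (rule card_UN_le[OF fI])
        also have "\<dots> \<le> (\<Sum>u\<in>I. r*d)"
        proof (rule sum_mono)
          fix u assume u: "u\<in>I"
          have "card (\<Union>w\<in>I-{u}. Nb \<Gamma> u \<inter> Nb \<Gamma> w) \<le> (\<Sum>w\<in>I-{u}. card (Nb \<Gamma> u \<inter> Nb \<Gamma> w))"
            by (rule card_UN_le) (use fI in simp)
          also have "\<dots> \<le> (\<Sum>w\<in>I-{u}. d)"
          proof (rule sum_mono)
            fix w assume w: "w \<in> I - {u}"
            then have "u\<noteq>w" "{u,w}\<notin>\<Gamma>" using u indI unfolding indep_def by auto
            then show "card (Nb \<Gamma> u \<inter> Nb \<Gamma> w) \<le> d" by (rule common_nb)
          qed
          also have "\<dots> = card (I - {u}) * d" by simp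
          also have "\<dots> \<le> r*d" unfolding r_def by (rule mult_le_mono1) (rule card_Diff1_le)
          finally show "card (\<Union>w\<in>I-{u}. Nb \<Gamma> u \<inter> Nb \<Gamma> w) \<le> r*d" .
        qed
        also have "\<dots> = r*r*d" unfolding r_def by simp
        finally show ?thesis .
      qed
      have cT0: "card T \<le> card ((\<Union>u\<in>I. A u) \<union> Y)"
        by (rule card_mono) (use fI fA fY cov in auto)
      have cT01: "card ((\<Union>u\<in>I. A u) \<union> Y) \<le> card (\<Union>u\<in>I. A u) + card Y" by (rule card_Un_le)
      have cT02: "card (\<Union>u\<in>I. A u) \<le> (\<Sum>u\<in>I. card (A u))" by (rule card_UN_le[OF fI])
      have cT1: "card T \<le> (\<Sum>u\<in>I. card (A u)) + r*r*d" using cT0 cT01 cT02 cY by linarith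
      have Ine: "I \<noteq> {}" using r2 r_def by auto
      define mA where "mA = Max ((\<lambda>u. card (A u)) ` I)"
      have "mA \<in> (\<lambda>u. card (A u)) ` I" unfolding mA_def using fI Ine by (intro Max_in) auto
      then obtain u0 where u0: "u0\<in>I" "card (A u0) = mA" by auto
      have maxA: "card (A u) \<le> card (A u0)" if "u\<in>I" for u
        using Max_ge[OF finite_imageI[OF fI] imageI[OF that]] u0 mA_def by simp
      have sA: "(\<Sum>u\<in>I. card (A u)) \<le> r * card (A u0)"
        using sum_bounded_above[of I "\<lambda>u. card (A u)" "card (A u0)"] maxA unfolding r_def by simp
      define T' where "T' = A u0 - {u0}"
      have cA: "card (A u0) \<le> card T' + 1" unfolding T'_def using fA[of u0] by (simp add: card_Diff_singleton_if) linarith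
      define I0' where "I0' = I0 \<union> (I - {u0})"
      have dis1: "I0 \<inter> (I - {u0}) = {}" using dis0 by blast
      have cI0': "card I0' = card I0 + (r - 1)"
        unfolding I0'_def using card_Un_disjoint[OF fI0 _ dis1] fI u0(1) r_def by (simp add: card_Diff_singleton)
      define j' where "j' = k - card I0'"
      have jj: "j' < j" "j' \<le> j - 1" using j lt r2 cI0' unfolding j'_def by auto
      have T'sub: "T' \<subseteq> T" unfolding T'_def A_def by auto
      have T'A: "t \<noteq> u0 \<and> {t,u0}\<in>\<Gamma> \<and> (\<forall>w\<in>I-{u0}. {t,w}\<notin>\<Gamma>)" if "t \<in> T'" for t
        using that unfolding T'_def A_def by auto
      have c1: "T' \<subseteq> S" using T'sub TS by blast
      have c2: "I0' \<subseteq> S" unfolding I0'_def using I0S IT TS by blast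
      have c3: "indep I0'" using ind0I unfolding I0'_def indep_def by blast
      have c4': "T' \<inter> I0' = {}"
      proof -
        { fix t assume t: "t \<in> T'" "t \<in> I0'"
          have "t \<notin> I0" using t T'sub dis by blast
          then have "t \<in> I" "t \<noteq> u0" using t unfolding I0'_def by auto
          moreover have "{t,u0} \<in> \<Gamma>" using T'A t by blast
          ultimately have False using indI u0(1) unfolding indep_def by blast }
        then show ?thesis by blast
      qed
      have c5: "\<forall>t\<in>T'. \<forall>i\<in>I0'. {t,i}\<notin>\<Gamma>"
        using noe T'sub T'A unfolding I0'_def by blast
      have IH0: "card T' \<le> (2*k)^j' * (k*k*d + d + k)"
        by (rule less.IH[OF jj(1), rule_format, OF j'_def[symmetric] c1 c2 c3 c4']) (use c5 in blast)
      have IH: "card T' \<le> (2*k)^j' * E" using IH0 unfolding E_def .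
      define X where "X = (2*k)^(j-1) * E"
      have "(2*k)^j' \<le> (2*k)^(j-1)" by (rule power_increasing[OF jj(2)]) (use k1 in simp)
      then have IH': "card T' \<le> X" using IH unfolding X_def by (meson le_trans mult_le_mono1)
      have jpos: "j = Suc (j-1)" using jj by arith
      have pX: "1 \<le> (2*k)^(j-1)" using k1 by simp
      have EX: "E \<le> X" unfolding X_def using pX by simp
      have rk: "r \<le> k" using lt by simp
      have s1': "r * card (A u0) \<le> k * (X+1)" using mult_le_mono[OF rk, of "card (A u0)" "X+1"] cA IH' by simp
      have s1: "r * card (A u0) \<le> k*X + k" using s1' by (simp add: algebra_simps)
      have s2: "r*r*d \<le> k*k*d" using rk by (simp add: mult_le_mono)
      have s3: "k + k*k*d \<le> E" unfolding E_def by simp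
      have s4: "X \<le> k*X" using k1 by simp
      have "card T \<le> k*X + k + k*k*d" using cT1 sA s1 s2 by linarith
      also have "\<dots> \<le> k*X + k*X" using s3 EX s4 by linarith
      also have "\<dots> = (2*k)^j * E" unfolding X_def by (subst jpos) (simp add: algebra_simps)
      finally show ?thesis .
    qed
    then show "card T \<le> (2*k)^j * (k*k*d + d + k)" unfolding E_def .
  qed
qed

lemma count_bound:
  fixes e2 :: real
  assumes k1: "1 \<le> k" and hk: "real k * e2 \<ge> 2"
    and hd: "real d * real k * real k < real (card (vertices \<Gamma>))"
  shows "card {v \<in> vertices \<Gamma>. real (vdegree \<Gamma> v) \<ge> e2 * real (card (vertices \<Gamma>))}
     \<le> (2*k)^k * (k*k*d + d + k)"
proof -
  define S where "S = {v \<in> vertices \<Gamma>. real (vdegree \<Gamma> v) \<ge> e2 * real (card (vertices \<Gamma>))}"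
  have SV: "S \<subseteq> vertices \<Gamma>" unfolding S_def by auto
  have hyp: "\<forall>J. J \<subseteq> S \<longrightarrow> indep J \<longrightarrow> card J < k"
  proof (intro allI impI)
    fix J assume J: "J \<subseteq> S" "indep J"
    show "card J < k"
    proof (rule ccontr)
      assume "\<not> card J < k"
      then have kle: "k \<le> card J" by simp
      obtain J' where J': "J' \<subseteq> J" "card J' = k" "finite J'"
        by (rule obtain_subset_with_card_n[OF kle])
      have indJ': "indep J'" using J(2) J'(1) unfolding indep_def by blast
      have "J' \<subseteq> S" using J(1) J'(1) by (rule subset_trans[rotated])
      then have J'S: "J' \<subseteq> {v \<in> vertices \<Gamma>. real (vdegree \<Gamma> v) \<ge> e2 * real (card (vertices \<Gamma>))}"
        unfolding S_def .
      show False by (rule indep_small[OF J'S indJ' J'(2) hk hd])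
    qed
  qed
  have R: "\<forall>T I0. k - card I0 = k \<longrightarrow> T \<subseteq> S \<longrightarrow> I0 \<subseteq> S \<longrightarrow> indep I0 \<longrightarrow> T \<inter> I0 = {}
     \<longrightarrow> (\<forall>t\<in>T. \<forall>i\<in>I0. {t,i}\<notin>\<Gamma>) \<longrightarrow> card T \<le> (2*k)^k * (k*k*d + d + k)"
    by (rule recur[OF SV hyp k1])
  have "card S \<le> (2*k)^k * (k*k*d + d + k)"
    using spec[OF spec[OF R, of S], of "{}"] by (simp add: indep_def)
  then show ?thesis unfolding S_def .
qed

end


theorem mainTheorem6:
  fixes K :: "'k::field itself"
  shows "\<forall>\<epsilon>1 \<epsilon>2 :: real. \<epsilon>1 > 0 \<and> \<epsilon>2 > 0 \<longrightarrow>
    (\<exists>\<delta> :: real. \<delta> > 0 \<and>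
      (\<forall>\<Gamma> d n. simplicial_complex \<Gamma> \<and> max_face_card \<Gamma> = d \<and> card (vertices \<Gamma>) = n
          \<and> girth1 K \<Gamma> > 4 \<and> real d < \<delta> * real n \<longrightarrow>
          real (card {v \<in> vertices \<Gamma>. real (vdegree \<Gamma> v) \<ge> \<epsilon>2 * real n}) \<le> \<epsilon>1 * real n))"
proof (intro allI impI)
  fix \<epsilon>1 \<epsilon>2 :: real
  assume eps: "\<epsilon>1 > 0 \<and> \<epsilon>2 > 0"
  then have e1: "\<epsilon>1 > 0" and e2: "\<epsilon>2 > 0" by auto
  define k where "k = nat \<lceil>2/\<epsilon>2\<rceil>"
  have k_ge: "2/\<epsilon>2 \<le> real k" unfolding k_def by (rule real_nat_ceiling_ge)
  have "0 < 2/\<epsilon>2" using e2 by simp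
  then have "0 < real k" using k_ge by linarith
  then have k1: "1 \<le> k" by simp
  have hk: "real k * \<epsilon>2 \<ge> 2" using k_ge e2 by (simp add: pos_divide_le_eq)
  define M :: nat where "M = (2*k)^k * (k*k + 1 + k)"
  have "0 < (2*k)^k" using k1 by simp
  moreover have "0 < k*k + 1 + k" by simp
  ultimately have "0 < M" unfolding M_def by (rule mult_pos_pos)
  then have M1: "1 \<le> M" by simp
  define \<delta> where "\<delta> = min (\<epsilon>1 / real M) (1 / (real k * real k))"
  have \<delta>pos: "\<delta> > 0" using e1 M1 k1 by (simp add: \<delta>_def)
  have \<delta>1: "\<delta> \<le> \<epsilon>1 / real M" and \<delta>2: "\<delta> \<le> 1 / (real k * real k)" unfolding \<delta>_def by auto
  show "\<exists>\<delta> :: real. \<delta> > 0 \<and>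
      (\<forall>\<Gamma> d n. simplicial_complex \<Gamma> \<and> max_face_card \<Gamma> = d \<and> card (vertices \<Gamma>) = n
          \<and> girth1 K \<Gamma> > 4 \<and> real d < \<delta> * real n \<longrightarrow>
          real (card {v \<in> vertices \<Gamma>. real (vdegree \<Gamma> v) \<ge> \<epsilon>2 * real n}) \<le> \<epsilon>1 * real n)"
  proof (intro exI[of _ \<delta>] conjI allI impI)
    show "\<delta> > 0" by (rule \<delta>pos)
    fix \<Gamma> d n
    assume H: "simplicial_complex \<Gamma> \<and> max_face_card \<Gamma> = d \<and> card (vertices \<Gamma>) = n
          \<and> girth1 K \<Gamma> > 4 \<and> real d < \<delta> * real n"
    then have sc: "simplicial_complex \<Gamma>" and dmax: "max_face_card \<Gamma> = d"
      and nV: "card (vertices \<Gamma>) = n" and g: "girth1 K \<Gamma> > 4" and dl: "real d < \<delta> * real n"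
      by auto
    have tri': "\<And>F a b c. F\<in>\<Gamma> \<Longrightarrow> a\<noteq>b \<Longrightarrow> b\<noteq>c \<Longrightarrow> a\<noteq>c \<Longrightarrow> a\<notin>F \<Longrightarrow> b\<notin>F \<Longrightarrow> c\<notin>F
     \<Longrightarrow> F\<union>{a,b}\<in>\<Gamma> \<Longrightarrow> F\<union>{b,c}\<in>\<Gamma> \<Longrightarrow> F\<union>{a,c}\<in>\<Gamma> \<Longrightarrow> F\<union>{a,b,c}\<in>\<Gamma>"
      by (rule tri_fill[OF g])
    have c4': "\<And>u x w y. distinct [u,x,w,y] \<Longrightarrow> {u,x}\<in>\<Gamma> \<Longrightarrow> {x,w}\<in>\<Gamma> \<Longrightarrow> {w,y}\<in>\<Gamma> \<Longrightarrow> {y,u}\<in>\<Gamma>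
     \<Longrightarrow> {u,w}\<notin>\<Gamma> \<Longrightarrow> {x,y}\<notin>\<Gamma> \<Longrightarrow> False"
      by (rule c4_free[OF sc g])
    interpret cpx \<Gamma> d by (rule cpx.intro[OF sc dmax tri' c4'])
    have "0 \<le> real d" by simp
    then have "0 < \<delta> * real n" using dl by linarith
    then have n0: "0 < n" using \<delta>pos by (simp add: zero_less_mult_iff)
    then have "vertices \<Gamma> \<noteq> {}" using nV by auto
    then obtain v A where vA: "A \<in> \<Gamma>" "v \<in> A" unfolding vertices_def by auto
    have "1 \<le> card A" using vA finF[OF vA(1)] by (simp add: Suc_le_eq card_gt_0_iff) blast
    then have d1: "1 \<le> d" using face_card[OF vA(1)] by simp
    have "\<delta> * real n \<le> (1 / (real k * real k)) * real n" by (rule mult_right_mono[OF \<delta>2]) simp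
    then have "real d < real n / (real k * real k)" using dl by simp
    then have "real d * (real k * real k) < real n" using k1 by (simp add: pos_less_divide_eq)
    then have hd: "real d * real k * real k < real (card (vertices \<Gamma>))" using nV by (simp add: mult.assoc)
    have cb: "card {v \<in> vertices \<Gamma>. real (vdegree \<Gamma> v) \<ge> \<epsilon>2 * real (card (vertices \<Gamma>))}
        \<le> (2*k)^k * (k*k*d + d + k)" by (rule count_bound[OF k1 hk hd])
    have "k*k*d + d + k \<le> (k*k + 1 + k) * d" using d1 by (simp add: algebra_simps)
    then have "(2*k)^k * (k*k*d + d + k) \<le> (2*k)^k * ((k*k + 1 + k) * d)" by (rule mult_le_mono2)
    also have "\<dots> = M * d" unfolding M_def by (simp only: mult.assoc)
    finally have "(2*k)^k * (k*k*d + d + k) \<le> M * d" .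
    with cb nV have cM: "card {v \<in> vertices \<Gamma>. real (vdegree \<Gamma> v) \<ge> \<epsilon>2 * real n} \<le> M * d" by simp
    then have "real (card {v \<in> vertices \<Gamma>. real (vdegree \<Gamma> v) \<ge> \<epsilon>2 * real n}) \<le> real M * real d"
      by (metis of_nat_mono of_nat_mult)
    also have "\<dots> \<le> real M * (\<delta> * real n)" using dl M1 by simp
    also have "\<dots> \<le> real M * ((\<epsilon>1 / real M) * real n)"
      using \<delta>1 M1 by (intro mult_left_mono mult_right_mono) auto
    also have "\<dots> = \<epsilon>1 * real n" using M1 by simp
    finally show "real (card {v \<in> vertices \<Gamma>. real (vdegree \<Gamma> v) \<ge> \<epsilon>2 * real n}) \<le> \<epsilon>1 * real n" .
  qed
qed

end
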